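(* Let $\mathbb{K}$ be a topological field, $d\in\mathbb{N}$, $F$ a topological $\mathbb{K}$-vector space, $U\subseteq\mathbb{K}^d$ open or of the form $U_1\times\cdots\times U_d$ with $U_i\subseteq\mathbb{K}$ having dense interior, $f\colon U\to F$, and $k\in\mathbb{N}_0$. Let $e_1,\ldots,e_d$ denote the standard unit multi-indices. (a) If $f$ is $C^1_{SDS}$ and $f^{<e_i>}$ is $C^k_{SDS}$ for each $i\in\{1,\ldots,d\}$, then $f$ is $C^{k+1}_{SDS}$. (b) Let $\mathbb{K}$ be a valued field and $\sigma>0$. If $f$ is $C^{1,\sigma}_{SDS}$ and $f^{<e_i>}$ is $C^{k,\sigma}_{SDS}$ for each $i\in\{1,\ldots,d\}$, then $f$ is $C^{k+1,\sigma}_{SDS}$.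
   Context: Topological fields are Hausdorff and non-discrete, vector spaces Hausdorff; a valued field is a field with absolute value defining a non-discrete topology. For $\alpha\in\mathbb{N}_0^d$, $|\alpha|=\sum\alpha_i$; write $x\in\mathbb{K}^{d+|\alpha|}$ as $(x^{(1)},\ldots,x^{(d)})$, $x^{(i)}=(x^{(i)}_0,\ldots,x^{(i)}_{\alpha_i})$. $U^{<\alpha>}$: all $x$ with $(x^{(1)}_{i_1},\ldots,x^{(d)}_{i_d})\in U$ for all $0\le i_\ell\le\alpha_\ell$; $U^{>\alpha<}$: those with $x^{(i)}_j\neq x^{(i)}_k$ for $j\neq k$. $f^{>0<}=f$, and for $|\alpha|\ge1$, $f^{>\alpha<}(x)=\sum_{j_1=0}^{\alpha_1}\cdots\sum_{j_d=0}^{\alpha_d}\big(\prod_{\ell=1}^d\prod_{k_\ell\neq j_\ell}(x^{(\ell)}_{j_\ell}-x^{(\ell)}_{k_\ell})^{-1}\big)f(x^{(1)}_{j_1},\ldots,x^{(d)}_{j_d})$ on $U^{>\alpha<}$. $f$ is $C^0_{SDS}$ if continuous ($f^{<0>}:=f$); $C^k_{SDS}$ if $C^{k-1}_{SDS}$ and for all $|\alpha|=k$, $f^{>\alpha<}$ has a continuous extension $f^{<\alpha>}$ to $U^{<\alpha>}$. The same definitions apply to maps on $U^{<e_i>}\subseteq\mathbb{K}^{d+1}$ (which is open, resp. a product of sets with dense interior). Gauge on a topological vector space $E$ over a valued field: $q\colon E\to[0,\infty[$, $q(tx)=|t|q(x)$, all balls $\{q<r\}$ are $0$-neighbourhoods.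 A map $g$ on a subset $V\subseteq E$ is $C^{0,\sigma}$ if for each $x_0\in V$ and gauge $q$ on $F$ there are a gauge $p$ on $E$ and a neighbourhood $W$ of $x_0$ in $V$ with $q(g(y)-g(x))\le p(y-x)^\sigma$ for $x,y\in W$. $f$ is $C^{k,\sigma}_{SDS}$ if $C^k_{SDS}$ and all $f^{<\alpha>}$, $|\alpha|\le k$, are $C^{0,\sigma}$. *)

theory Defs
  imports "HOL-Analysis.Analysis"
begin

text \<open>The variables of a function of several variables are indexed by
an arbitrary finite index set I (for K^d: I = {..<d}); a point of K^I is an
extensional function in PiE I UNIV, with the product topology. A multi-index is
alpha :: 'a => nat (only its values on I matter), |alpha| = sum alpha I. A point
of K^{d+|alpha|} is an extensional function on SIGMA i:I. {..alpha i}, with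
x (i,j) standing for x^{(i)}_j.\<close>

definition prodtop :: "'a set \<Rightarrow> ('a \<Rightarrow> 'k::topological_space) topology" where
  "prodtop I = product_topology (\<lambda>_. euclidean) I"

definition topological_field :: "'k::{field,t2_space} itself \<Rightarrow> bool" where
  "topological_field _ \<longleftrightarrow>
     continuous_on UNIV (\<lambda>p::'k\<times>'k. fst p + snd p) \<and>
     continuous_on UNIV (\<lambda>p::'k\<times>'k. fst p * snd p) \<and>
     continuous_on UNIV (uminus :: 'k \<Rightarrow> 'k) \<and>
     continuous_on (-{0}) (inverse :: 'k \<Rightarrow> 'k) \<and>
     \<not> (\<forall>S::'k set. open S)"

definition tvs :: "('k::{field,t2_space} \<Rightarrow> 'f::{ab_group_add,t2_space} \<Rightarrow> 'f) \<Rightarrow> bool" where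
  "tvs smul \<longleftrightarrow> Vector_Spaces.vector_space smul \<and>
     continuous_on UNIV (\<lambda>p::'f\<times>'f. fst p + snd p) \<and>
     continuous_on UNIV (\<lambda>p::'k\<times>'f. smul (fst p) (snd p))"

definition valued_field :: "('k::{field,topological_space} \<Rightarrow> real) \<Rightarrow> bool" where
  "valued_field av \<longleftrightarrow>
     (\<forall>x. 0 \<le> av x) \<and> (\<forall>x. av x = 0 \<longleftrightarrow> x = 0) \<and>
     (\<forall>x y. av (x * y) = av x * av y) \<and> (\<forall>x y. av (x + y) \<le> av x + av y) \<and>
     (\<forall>S::'k set. open S \<longleftrightarrow> (\<forall>x\<in>S. \<exists>r>0. \<forall>y. av (y - x) < r \<longrightarrow> y \<in> S))"

definition unitmi :: "'a \<Rightarrow> 'a \<Rightarrow> nat" where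
  "unitmi i = (\<lambda>l. if l = i then 1 else 0)"

definition sds_lt :: "'a set \<Rightarrow> ('a \<Rightarrow> nat) \<Rightarrow> ('a \<Rightarrow> 'k) set \<Rightarrow> ('a \<times> nat \<Rightarrow> 'k) set" where
  "sds_lt I \<alpha> U = {x \<in> PiE (SIGMA i:I. {..\<alpha> i}) (\<lambda>_. UNIV).
      \<forall>j \<in> PiE I (\<lambda>i. {..\<alpha> i}). (\<lambda>i\<in>I. x (i, j i)) \<in> U}"

definition sds_gt :: "'a set \<Rightarrow> ('a \<Rightarrow> nat) \<Rightarrow> ('a \<Rightarrow> 'k) set \<Rightarrow> ('a \<times> nat \<Rightarrow> 'k) set" where
  "sds_gt I \<alpha> U = {x \<in> sds_lt I \<alpha> U.
      \<forall>i\<in>I. \<forall>j\<le>\<alpha> i. \<forall>l\<le>\<alpha> i. j \<noteq> l \<longrightarrow> x (i, j) \<noteq> x (i, l)}"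

definition sds_dd :: "('k::field \<Rightarrow> 'f \<Rightarrow> 'f::ab_group_add) \<Rightarrow> 'a set \<Rightarrow> ('a \<Rightarrow> nat)
    \<Rightarrow> (('a \<Rightarrow> 'k) \<Rightarrow> 'f) \<Rightarrow> ('a \<times> nat \<Rightarrow> 'k) \<Rightarrow> 'f" where
  "sds_dd smul I \<alpha> f x =
     (\<Sum>j\<in>PiE I (\<lambda>i. {..\<alpha> i}).
        smul (\<Prod>l\<in>I. \<Prod>m\<in>{..\<alpha> l} - {j l}. inverse (x (l, j l) - x (l, m)))
              (f (\<lambda>i\<in>I. x (i, j i))))"

fun sds_C :: "('k::{field,topological_space} \<Rightarrow> 'f \<Rightarrow> 'f::{ab_group_add,topological_space})
    \<Rightarrow> 'a set \<Rightarrow> ('a \<Rightarrow> 'k) set \<Rightarrow> (('a \<Rightarrow> 'k) \<Rightarrow> 'f) \<Rightarrow> nat \<Rightarrow> bool" where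
  "sds_C smul I U f 0 = continuous_map (subtopology (prodtop I) U) euclidean f"
| "sds_C smul I U f (Suc k) = (sds_C smul I U f k \<and>
     (\<forall>\<alpha>. sum \<alpha> I = Suc k \<longrightarrow>
        (\<exists>g. continuous_map (subtopology (prodtop (SIGMA i:I. {..\<alpha> i})) (sds_lt I \<alpha> U)) euclidean g
             \<and> (\<forall>x\<in>sds_gt I \<alpha> U. g x = sds_dd smul I \<alpha> f x))))"

definition sds_ext :: "('k::{field,topological_space} \<Rightarrow> 'f \<Rightarrow> 'f::{ab_group_add,topological_space})
    \<Rightarrow> 'a set \<Rightarrow> ('a \<Rightarrow> 'k) set \<Rightarrow> (('a \<Rightarrow> 'k) \<Rightarrow> 'f) \<Rightarrow> ('a \<Rightarrow> nat) \<Rightarrow> ('a \<times> nat \<Rightarrow> 'k) \<Rightarrow> 'f" where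
  "sds_ext smul I U f \<alpha> = (SOME g.
     continuous_map (subtopology (prodtop (SIGMA i:I. {..\<alpha> i})) (sds_lt I \<alpha> U)) euclidean g
     \<and> (\<forall>x\<in>sds_gt I \<alpha> U. g x = sds_dd smul I \<alpha> f x))"

definition gaugeF :: "('k \<Rightarrow> real) \<Rightarrow> ('k \<Rightarrow> 'f \<Rightarrow> 'f::{zero,topological_space}) \<Rightarrow> ('f \<Rightarrow> real) \<Rightarrow> bool" where
  "gaugeF av smul q \<longleftrightarrow> (\<forall>x. 0 \<le> q x) \<and> (\<forall>t x. q (smul t x) = av t * q x) \<and>
     (\<forall>r>0. \<exists>S. open S \<and> 0 \<in> S \<and> S \<subseteq> {x. q x < r})"

definition gaugeE :: "('k::{field,topological_space} \<Rightarrow> real) \<Rightarrow> 'b set \<Rightarrow> (('b \<Rightarrow> 'k) \<Rightarrow> real) \<Rightarrow> bool" where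
  "gaugeE av J p \<longleftrightarrow> (\<forall>x\<in>PiE J (\<lambda>_. UNIV). 0 \<le> p x) \<and>
     (\<forall>t. \<forall>x\<in>PiE J (\<lambda>_. UNIV). p (\<lambda>j\<in>J. t * x j) = av t * p x) \<and>
     (\<forall>r>0. \<exists>S. openin (prodtop J) S \<and> (\<lambda>j\<in>J. 0) \<in> S \<and> (\<forall>x\<in>S. p x < r))"

definition holder :: "('k::{field,topological_space} \<Rightarrow> real) \<Rightarrow> ('k \<Rightarrow> 'f \<Rightarrow> 'f::{ab_group_add,topological_space})
    \<Rightarrow> 'b set \<Rightarrow> ('b \<Rightarrow> 'k) set \<Rightarrow> (('b \<Rightarrow> 'k) \<Rightarrow> 'f) \<Rightarrow> real \<Rightarrow> bool" where
  "holder av smul J V g \<sigma> \<longleftrightarrow> (\<forall>x0\<in>V. \<forall>q. gaugeF av smul q \<longrightarrow>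
     (\<exists>p W. gaugeE av J p \<and> W \<subseteq> V \<and> (\<exists>N. openin (prodtop J) N \<and> x0 \<in> N \<and> N \<inter> V \<subseteq> W) \<and>
        (\<forall>x\<in>W. \<forall>y\<in>W. q (g y - g x) \<le> p (\<lambda>j\<in>J. y j - x j) powr \<sigma>)))"

text \<open>C^{k,sigma}_SDS (f^{<0>} = f)\<close>
definition sds_CH :: "('k::{field,topological_space} \<Rightarrow> real) \<Rightarrow> ('k \<Rightarrow> 'f \<Rightarrow> 'f::{ab_group_add,topological_space})
    \<Rightarrow> 'a set \<Rightarrow> ('a \<Rightarrow> 'k) set \<Rightarrow> (('a \<Rightarrow> 'k) \<Rightarrow> 'f) \<Rightarrow> nat \<Rightarrow> real \<Rightarrow> bool" where
  "sds_CH av smul I U f k \<sigma> \<longleftrightarrow> sds_C smul I U f k \<and> holder av smul I U f \<sigma> \<and>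
     (\<forall>\<alpha>. 1 \<le> sum \<alpha> I \<and> sum \<alpha> I \<le> k \<longrightarrow>
        holder av smul (SIGMA i:I. {..\<alpha> i}) (sds_lt I \<alpha> U) (sds_ext smul I U f \<alpha>) \<sigma>)"

end

theory Submission
  imports Defs
begin


lemma pf_term:
  fixes t b c P :: "'k::field"
  assumes "t \<noteq> c" "t \<noteq> b" "b \<noteq> c" "P \<noteq> 0"
  shows "inverse (t - c) * inverse ((c - b) * P) + inverse ((t - b) * ((b - c) * P))
       = inverse (t - c) * inverse ((t - b) * P)"
proof -
  have h: "c - b \<noteq> 0" "t - c \<noteq> 0" "t - b \<noteq> 0" using assms by auto
  have k: "inverse (t - c) - inverse (t - b) = (c - b) * (inverse (t - c) * inverse (t - b))"
    using h by (simp add: field_simps)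
  have a1: "inverse ((c - b) * P) = inverse (c - b) * inverse P" by (simp add: inverse_mult_distrib)
  have a2: "inverse ((t - b) * ((b - c) * P)) = - (inverse (t - b) * inverse (c - b) * inverse P)"
  proof -
    have "inverse (b - c) = - inverse (c - b)" by (metis inverse_minus_eq minus_diff_eq)
    then show ?thesis by (simp add: inverse_mult_distrib)
  qed
  have "inverse (t - c) * inverse ((c - b) * P) + inverse ((t - b) * ((b - c) * P))
     = (inverse (t - c) - inverse (t - b)) * inverse (c - b) * inverse P"
    unfolding a1 a2 by (simp add: algebra_simps)
  also have "\<dots> = ((c - b) * inverse (c - b)) * (inverse (t - c) * (inverse (t - b) * inverse P))"
    unfolding k by (simp add: ac_simps)
  also have "\<dots> = inverse (t - c) * inverse ((t - b) * P)"
    using h by (simp add: inverse_mult_distrib)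
  finally show ?thesis .
qed

lemma partial_fractions:
  fixes y :: "'b \<Rightarrow> 'k::field"
  assumes "finite B" "B \<noteq> {}" "inj_on y B" "t \<notin> y ` B"
  shows "(\<Sum>b\<in>B. inverse ((t - y b) * (\<Prod>m\<in>B-{b}. (y b - y m)))) = inverse (\<Prod>m\<in>B. (t - y m))"
  using assms
proof (induction B arbitrary: t rule: finite_ne_induct)
  case (singleton x)
  then show ?case by simp
next
  case (insert c B)
  define P where "P b = (\<Prod>m\<in>B-{b}. (y b - y m))" for b
  have inj: "inj_on y B" and cB: "y c \<notin> y ` B" using insert.prems insert.hyps by auto
  have IHc: "(\<Sum>b\<in>B. inverse ((y c - y b) * P b)) = inverse (\<Prod>m\<in>B. (y c - y m))"
    using insert.IH[OF inj cB] unfolding P_def by simp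
  have tB: "t \<notin> y ` B" using insert.prems by auto
  have IHt: "(\<Sum>b\<in>B. inverse ((t - y b) * P b)) = inverse (\<Prod>m\<in>B. (t - y m))"
    using insert.IH[OF inj tB] unfolding P_def by simp
  have Pnz: "P b \<noteq> 0" if "b \<in> B" for b
    unfolding P_def using that inj insert.hyps by (auto simp: inj_on_def)
  have e1: "(\<Prod>m\<in>insert c B-{b}. (y b - y m)) = (y b - y c) * P b" if "b \<in> B" for b
  proof -
    have "insert c B - {b} = insert c (B - {b})" using that insert.hyps by auto
    then show ?thesis unfolding P_def using insert.hyps by (simp)
  qed
  have e2: "insert c B - {c} = B" using insert.hyps by auto
  have "(\<Sum>b\<in>insert c B. inverse ((t - y b) * (\<Prod>m\<in>insert c B-{b}. (y b - y m))))
      = inverse ((t - y c) * (\<Prod>m\<in>B. (y c - y m))) + (\<Sum>b\<in>B. inverse ((t - y b) * ((y b - y c) * P b)))"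
    using insert.hyps e1 e2 by (simp add: sum.insert)
  also have "\<dots> = inverse (t - y c) * (\<Sum>b\<in>B. inverse ((y c - y b) * P b)) + (\<Sum>b\<in>B. inverse ((t - y b) * ((y b - y c) * P b)))"
    unfolding IHc by (simp only: inverse_mult_distrib)
  also have "\<dots> = (\<Sum>b\<in>B. inverse (t - y c) * inverse ((y c - y b) * P b) + inverse ((t - y b) * ((y b - y c) * P b)))"
    by (simp add: sum_distrib_left sum.distrib)
  also have "\<dots> = (\<Sum>b\<in>B. inverse (t - y c) * inverse ((t - y b) * P b))"
  proof (rule sum.cong[OF refl])
    fix b assume b: "b \<in> B"
    have "t \<noteq> y c" "t \<noteq> y b" using insert.prems b by auto
    moreover have "y b \<noteq> y c" using cB b by (metis imageI)
    ultimately show "inverse (t - y c) * inverse ((y c - y b) * P b) + inverse ((t - y b) * ((y b - y c) * P b))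
      = inverse (t - y c) * inverse ((t - y b) * P b)" by (rule pf_term[OF _ _ _ Pnz[OF b]])
  qed
  also have "\<dots> = inverse (t - y c) * (\<Sum>b\<in>B. inverse ((t - y b) * P b))"
    by (simp only: sum_distrib_left)
  also have "\<dots> = inverse (\<Prod>m\<in>insert c B. (t - y m))"
    unfolding IHt using insert.hyps by (simp add: inverse_mult_distrib)
  finally show ?case .
qed

lemma prod_inv: "(\<Prod>m\<in>A. inverse (f m :: 'k::field)) = inverse (\<Prod>m\<in>A. f m)"
  using prod_inversef[of f A] by (simp add: comp_def)

lemma pf_nat:
  fixes x :: "nat \<Rightarrow> 'k::field"
  assumes "inj_on x {..Suc n}"
  shows "(\<Sum>b\<le>n. (\<Prod>m\<in>{..n}-{b}. inverse (x (Suc b) - x (Suc m))) * inverse (x 0 - x (Suc b)))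
     = (\<Prod>m\<in>{..Suc n}-{0}. inverse (x 0 - x m))"
proof -
  have inj: "inj_on (\<lambda>m. x (Suc m)) {..n}" using assms by (auto simp: inj_on_def)
  have t: "x 0 \<notin> (\<lambda>m. x (Suc m)) ` {..n}" using assms by (auto simp: inj_on_def)
  have "{..Suc n}-{0} = Suc ` {..n}" unfolding atMost_Suc_eq_insert_0 by auto
  then have r: "(\<Prod>m\<in>{..Suc n}-{0}. inverse (x 0 - x m)) = (\<Prod>m\<le>n. inverse (x 0 - x (Suc m)))"
    and r': "(\<Prod>m\<in>{..Suc n}-{0}. (x 0 - x m)) = (\<Prod>m\<le>n. (x 0 - x (Suc m)))"
    by (simp_all add: prod.reindex)
  show ?thesis
    unfolding r prod_inv
    using partial_fractions[OF _ _ inj t] by (simp add: inverse_mult_distrib mult.commute r')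
qed

context vector_space
begin

lemma univ_dd:
  assumes "inj_on x {..Suc n}"
  shows "(\<Sum>a\<le>Suc n. scale (\<Prod>m\<in>{..Suc n}-{a}. inverse (x a - x m)) (h a))
      = (\<Sum>b\<le>n. scale (\<Prod>m\<in>{..n}-{b}. inverse (x (Suc b) - x (Suc m)))
              (scale (inverse (x 0 - x (Suc b))) (h 0) + scale (inverse (x (Suc b) - x 0)) (h (Suc b))))"
proof -
  define w' where "w' b = (\<Prod>m\<in>{..n}-{b}. inverse (x (Suc b) - x (Suc m)))" for b
  have e1: "(\<Prod>m\<in>{..Suc n}-{Suc b}. inverse (x (Suc b) - x m)) = w' b * inverse (x (Suc b) - x 0)"
    if "b \<le> n" for b
  proof -
    have "{..Suc n}-{Suc b} = insert 0 (Suc ` {..n} - Suc ` {b})"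
      unfolding atMost_Suc_eq_insert_0 by auto
    also have "\<dots> = insert 0 (Suc ` ({..n}-{b}))"
      by (simp add: image_set_diff)
    finally have "{..Suc n}-{Suc b} = insert 0 (Suc ` ({..n}-{b}))" .
    then show ?thesis unfolding w'_def by (simp add: prod.reindex mult.commute)
  qed
  have "(\<Sum>b\<le>n. scale (w' b) (scale (inverse (x 0 - x (Suc b))) (h 0) + scale (inverse (x (Suc b) - x 0)) (h (Suc b))))
     = scale (\<Sum>b\<le>n. w' b * inverse (x 0 - x (Suc b))) (h 0)
       + (\<Sum>b\<le>n. scale (w' b * inverse (x (Suc b) - x 0)) (h (Suc b)))"
    by (simp add: scale_right_distrib sum.distrib scale_sum_left)
  also have "\<dots> = scale (\<Prod>m\<in>{..Suc n}-{0}. inverse (x 0 - x m)) (h 0)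
       + (\<Sum>b\<le>n. scale (\<Prod>m\<in>{..Suc n}-{Suc b}. inverse (x (Suc b) - x m)) (h (Suc b)))"
  proof -
    have "(\<Sum>b\<le>n. w' b * inverse (x 0 - x (Suc b))) = (\<Prod>m\<in>{..Suc n}-{0}. inverse (x 0 - x m))"
      using pf_nat[OF assms] unfolding w'_def .
    moreover have "(\<Sum>b\<le>n. scale (w' b * inverse (x (Suc b) - x 0)) (h (Suc b)))
       = (\<Sum>b\<le>n. scale (\<Prod>m\<in>{..Suc n}-{Suc b}. inverse (x (Suc b) - x m)) (h (Suc b)))"
      by (rule sum.cong[OF refl]) (simp only: e1 atMost_iff)
    ultimately show ?thesis by simp
  qed
  also have "\<dots> = (\<Sum>a\<le>Suc n. scale (\<Prod>m\<in>{..Suc n}-{a}. inverse (x a - x m)) (h a))"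
    by (simp only: sum.atMost_Suc_shift)
  finally show ?thesis unfolding w'_def by (rule sym)
qed

end


lemma PiE_unit:
  assumes "i \<in> I"
  shows "PiE I (\<lambda>l. {..unitmi i l}) = {(\<lambda>l\<in>I. 0), (\<lambda>l\<in>I. unitmi i l)}"
proof (intro set_eqI iffI)
  fix c assume c: "c \<in> PiE I (\<lambda>l. {..unitmi i l})"
  show "c \<in> {(\<lambda>l\<in>I. 0), (\<lambda>l\<in>I. unitmi i l)}"
  proof (cases "c i = 0")
    case True
    then have "c = (\<lambda>l\<in>I. 0)" using c by (auto simp: fun_eq_iff PiE_iff unitmi_def extensional_def split: if_splits)
    then show ?thesis by simp
  next
    case False
    then have "c = (\<lambda>l\<in>I. unitmi i l)" using c assms
      by (auto simp: fun_eq_iff PiE_iff unitmi_def extensional_def split: if_splits)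
    then show ?thesis by simp
  qed
next
  fix c assume "c \<in> {(\<lambda>l\<in>I. 0), (\<lambda>l\<in>I. unitmi i l)}"
  then show "c \<in> PiE I (\<lambda>l. {..unitmi i l})" by auto
qed

context vector_space
begin

lemma dd_unit:
  assumes "finite I" "i \<in> I"
  shows "sds_dd scale I (unitmi i) f z =
     scale (inverse (z (i,0) - z (i,1))) (f (\<lambda>l\<in>I. z (l,0)))
   + scale (inverse (z (i,1) - z (i,0))) (f (\<lambda>l\<in>I. z (l, unitmi i l)))"
proof -
  have ne: "(\<lambda>l\<in>I. (0::nat)) \<noteq> (\<lambda>l\<in>I. unitmi i l)"
    using assms by (auto simp: fun_eq_iff unitmi_def)
  have p0: "(\<Prod>l\<in>I. \<Prod>m\<in>{..unitmi i l} - {(\<lambda>l\<in>I. 0) l}. inverse (z (l, (\<lambda>l\<in>I. 0) l) - z (l, m)))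
      = inverse (z (i,0) - z (i,1))"
  proof -
    have "{..Suc 0} - {0} = {Suc 0}" by auto
    moreover have "(\<Prod>l\<in>I-{i}. \<Prod>m\<in>{..unitmi i l} - {(\<lambda>l\<in>I. 0) l}. inverse (z (l, (\<lambda>l\<in>I. 0) l) - z (l, m))) = 1"
      by (rule prod.neutral) (auto simp: unitmi_def)
    ultimately show ?thesis using prod.remove[OF assms, of "\<lambda>l. \<Prod>m\<in>{..unitmi i l} - {(\<lambda>l\<in>I. 0) l}. inverse (z (l, (\<lambda>l\<in>I. 0) l) - z (l, m))"]
      assms by (simp add: unitmi_def)
  qed
  have p1: "(\<Prod>l\<in>I. \<Prod>m\<in>{..unitmi i l} - {(\<lambda>l\<in>I. unitmi i l) l}. inverse (z (l, (\<lambda>l\<in>I. unitmi i l) l) - z (l, m)))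
      = inverse (z (i,1) - z (i,0))"
  proof -
    have "{..Suc 0} - {Suc 0} = {0}" by auto
    moreover have "(\<Prod>l\<in>I-{i}. \<Prod>m\<in>{..unitmi i l} - {(\<lambda>l\<in>I. unitmi i l) l}. inverse (z (l, (\<lambda>l\<in>I. unitmi i l) l) - z (l, m))) = 1"
      by (rule prod.neutral) (auto simp: unitmi_def)
    ultimately show ?thesis using prod.remove[OF assms, of "\<lambda>l. \<Prod>m\<in>{..unitmi i l} - {(\<lambda>l\<in>I. unitmi i l) l}. inverse (z (l, (\<lambda>l\<in>I. unitmi i l) l) - z (l, m))"]
      assms by (simp add: unitmi_def)
  qed
  have f0: "(\<lambda>l\<in>I. z (l, (\<lambda>l\<in>I. 0::nat) l)) = (\<lambda>l\<in>I. z (l,0))" by auto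
  have f1: "(\<lambda>l\<in>I. z (l, (\<lambda>l\<in>I. unitmi i l) l)) = (\<lambda>l\<in>I. z (l, unitmi i l))" by auto
  show ?thesis
    unfolding sds_dd_def PiE_unit[OF assms(2)] using ne p0 p1 f0 f1 by simp
qed

lemma dd_step:
  fixes I :: "'i set" and x :: "'i \<times> nat \<Rightarrow> 'a"
  assumes fin: "finite I" and iI: "i \<in> I" and ai: "\<alpha> i = Suc n"
    and inj: "inj_on (\<lambda>m. x (i,m)) {..Suc n}"
    and yx: "\<And>l c m. l \<in> I \<Longrightarrow> c \<le> unitmi i l \<Longrightarrow> m \<le> \<beta> (l,c) \<Longrightarrow> y ((l,c),m) = x (l, c + m)"
    and bdef: "\<And>l c. \<beta> (l,c) = (if l = i then (if c = 0 then 0 else n) else \<alpha> l)"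
  shows "sds_dd scale (SIGMA l:I. {..unitmi i l}) \<beta> (sds_dd scale I (unitmi i) f) y = sds_dd scale I \<alpha> f x"
proof -
  define I0 where "I0 = I - {i}"
  define I' where "I' = (SIGMA l:I. {..unitmi i l})"
  define P0 where "P0 = PiE I0 (\<lambda>l. {..\<alpha> l})"
  define w where "w l a = (\<Prod>m\<in>{..\<alpha> l}-{a}. inverse (x (l,a) - x (l,m)))" for l a
  define W0 where "W0 g = (\<Prod>l\<in>I0. w l (g l))" for g
  define pt where "pt g a = (\<lambda>l\<in>I. if l = i then x (i,a) else x (l, g l))" for g a
  define w' where "w' b = (\<Prod>m\<in>{..n}-{b}. inverse (x (i, Suc b) - x (i, Suc m)))" for b
  define tJ where "tJ gb = (\<lambda>p\<in>I'. if fst p = i then (if snd p = 0 then 0 else snd gb) else fst gb (fst p))" for gb :: "('i \<Rightarrow> nat) \<times> nat"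
  define G where "G = sds_dd scale I (unitmi i) f"
  have I_eq: "I = insert i I0" and iI0: "i \<notin> I0" and finI0: "finite I0"
    using iI fin unfolding I0_def by auto
  have finI': "finite I'" unfolding I'_def using fin by auto
  have "sds_dd scale I \<alpha> f x = (\<Sum>j\<in>PiE I (\<lambda>l. {..\<alpha> l}). scale (\<Prod>l\<in>I. w l (j l)) (f (\<lambda>l\<in>I. x (l, j l))))"
    unfolding sds_dd_def w_def ..
  also have "\<dots> = (\<Sum>ga\<in>P0 \<times> {..Suc n}. scale (w i (snd ga) * W0 (fst ga)) (f (pt (fst ga) (snd ga))))"
  proof (rule sum.reindex_bij_witness[where i="\<lambda>ga. (fst ga)(i := snd ga)" and j="\<lambda>j. (restrict j I0, j i)"])
    fix j assume j: "j \<in> PiE I (\<lambda>l. {..\<alpha> l})"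
    then show "(fst (restrict j I0, j i))(i := snd (restrict j I0, j i)) = j"
      unfolding I0_def by (auto simp: fun_eq_iff PiE_iff extensional_def)
    show "(restrict j I0, j i) \<in> P0 \<times> {..Suc n}" using j ai iI unfolding P0_def I0_def by (auto simp: PiE_iff)
    have "(\<Prod>l\<in>I. w l (j l)) = w i (j i) * W0 (restrict j I0)"
      unfolding W0_def using prod.remove[OF fin iI, of "\<lambda>l. w l (j l)"] unfolding I0_def by simp
    moreover have "(\<lambda>l\<in>I. x (l, j l)) = pt (restrict j I0) (j i)"
      unfolding pt_def I0_def by (auto simp: fun_eq_iff)
    ultimately show "scale (w i (snd (restrict j I0, j i)) * W0 (fst (restrict j I0, j i)))
        (f (pt (fst (restrict j I0, j i)) (snd (restrict j I0, j i)))) =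
       scale (\<Prod>l\<in>I. w l (j l)) (f (\<lambda>l\<in>I. x (l, j l)))" by simp
  next
    fix ga assume ga: "ga \<in> P0 \<times> {..Suc n}"
    then show "(restrict ((fst ga)(i := snd ga)) I0, ((fst ga)(i := snd ga)) i) = ga"
      unfolding P0_def I0_def by (cases ga) (auto simp: fun_eq_iff PiE_iff extensional_def)
    show "(fst ga)(i := snd ga) \<in> PiE I (\<lambda>l. {..\<alpha> l})"
      using ga ai iI unfolding P0_def I0_def by (cases ga) (auto simp: PiE_iff extensional_def)
  qed
  also have "\<dots> = (\<Sum>g\<in>P0. scale (W0 g) (\<Sum>a\<le>Suc n. scale (w i a) (f (pt g a))))"
    by (simp add: sum.cartesian_product' scale_sum_right mult.commute del: sum.atMost_Suc)
  finally have RHS: "sds_dd scale I \<alpha> f x = (\<Sum>g\<in>P0. scale (W0 g) (\<Sum>a\<le>Suc n. scale (w i a) (f (pt g a))))" .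
  have tmq: "scale (\<Prod>p\<in>I'. \<Prod>m\<in>{..\<beta> p}-{j p}. inverse (y (p, j p) - y (p, m))) (G (\<lambda>p\<in>I'. y (p, j p)))
     = scale (W0 (\<lambda>l\<in>I0. j (l,0)) * w' (j (i,1)))
         (scale (inverse (x (i,0) - x (i, Suc (j (i,1))))) (f (pt (\<lambda>l\<in>I0. j (l,0)) 0))
        + scale (inverse (x (i, Suc (j (i,1))) - x (i,0))) (f (pt (\<lambda>l\<in>I0. j (l,0)) (Suc (j (i,1))))))"
    if j: "j \<in> PiE I' (\<lambda>p. {..\<beta> p})" for j
  proof -
    define F where "F p = (\<Prod>m\<in>{..\<beta> p}-{j p}. inverse (y (p, j p) - y (p, m)))" for p
    have ji0: "j (i,0) = 0" using PiE_mem[OF j, of "(i,0)"] iI unfolding I'_def by (simp add: bdef)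
    have ji1: "j (i,1) \<le> n" using PiE_mem[OF j, of "(i,1)"] iI unfolding I'_def by (simp add: bdef unitmi_def)
    have jl0: "j (l,0) \<le> \<alpha> l" if "l \<in> I0" for l
      using PiE_mem[OF j, of "(l,0)"] that unfolding I'_def I0_def by (simp add: bdef)
    have "(\<Prod>p\<in>I'. F p) = (\<Prod>l\<in>I. \<Prod>c\<in>{..unitmi i l}. F (l,c))"
      unfolding I'_def using fin by (simp add: prod.Sigma)
    also have "\<dots> = (\<Prod>c\<in>{..Suc 0}. F (i,c)) * (\<Prod>l\<in>I0. \<Prod>c\<in>{..0}. F (l,c))"
      using prod.remove[OF fin iI, of "\<lambda>l. \<Prod>c\<in>{..unitmi i l}. F (l,c)"] unfolding I0_def
      by (simp add: unitmi_def)
    also have "\<dots> = F (i,0) * F (i,1) * (\<Prod>l\<in>I0. F (l,0))"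
      by (simp add: atMost_Suc)
    also have "F (i,0) = 1" unfolding F_def using ji0 by (simp add: bdef)
    also have "F (i,1) = w' (j (i,1))"
      unfolding F_def w'_def using iI ji1 by (intro prod.cong) (auto simp: bdef yx unitmi_def)
    also have "(\<Prod>l\<in>I0. F (l,0)) = W0 (\<lambda>l\<in>I0. j (l,0))"
      unfolding W0_def F_def w_def
      using jl0 by (intro prod.cong refl) (auto simp: bdef yx unitmi_def I0_def)
    finally have wt: "(\<Prod>p\<in>I'. F p) = W0 (\<lambda>l\<in>I0. j (l,0)) * w' (j (i,1))" by simp
    define z where "z = (\<lambda>p\<in>I'. y (p, j p))"
    have z0: "z (i,0) = x (i,0)" unfolding z_def I'_def using iI ji0 by (simp add: yx bdef unitmi_def)
    have z1: "z (i,1) = x (i, Suc (j (i,1)))" unfolding z_def I'_def using iI ji1 by (simp add: yx bdef unitmi_def)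
    have zp0: "(\<lambda>l\<in>I. z (l,0)) = pt (\<lambda>l\<in>I0. j (l,0)) 0"
      unfolding pt_def z_def I'_def using ji0 jl0 by (auto simp: fun_eq_iff yx bdef unitmi_def I0_def)
    have zp1: "(\<lambda>l\<in>I. z (l, unitmi i l)) = pt (\<lambda>l\<in>I0. j (l,0)) (Suc (j (i,1)))"
      unfolding pt_def z_def I'_def using ji1 jl0 by (auto simp: fun_eq_iff yx bdef unitmi_def I0_def)
    show ?thesis
      unfolding F_def[symmetric] wt G_def z_def[symmetric] dd_unit[OF fin iI] z0 z1 zp0 zp1 ..
  qed
  have "sds_dd scale I' \<beta> G y = (\<Sum>j\<in>PiE I' (\<lambda>p. {..\<beta> p}).
      scale (\<Prod>p\<in>I'. \<Prod>m\<in>{..\<beta> p}-{j p}. inverse (y (p, j p) - y (p, m))) (G (\<lambda>p\<in>I'. y (p, j p))))"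
    unfolding sds_dd_def ..
  also have "\<dots> = (\<Sum>gb\<in>P0 \<times> {..n}. scale (W0 (fst gb) * w' (snd gb))
         (scale (inverse (x (i,0) - x (i, Suc (snd gb)))) (f (pt (fst gb) 0))
        + scale (inverse (x (i, Suc (snd gb)) - x (i,0))) (f (pt (fst gb) (Suc (snd gb))))))"
  proof (rule sum.reindex_bij_witness[where i="tJ" and j="\<lambda>j. (\<lambda>l\<in>I0. j (l,0), j (i,1))"])
    fix j assume j: "j \<in> PiE I' (\<lambda>p. {..\<beta> p})"
    have ji0: "j (i,0) = 0" using PiE_mem[OF j, of "(i,0)"] iI unfolding I'_def by (simp add: bdef)
    show "tJ (\<lambda>l\<in>I0. j (l,0), j (i,1)) = j"
    proof (rule ext)
      fix p show "tJ (\<lambda>l\<in>I0. j (l,0), j (i,1)) p = j p"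
      proof (cases "p \<in> I'")
        case False
        have "tJ (\<lambda>l\<in>I0. j (l,0), j (i,1)) p = undefined" unfolding tJ_def using False by simp
        moreover have "j p = undefined" by (rule PiE_arb[OF j False])
        ultimately show ?thesis by simp
      next
        case True
        then obtain l c where p: "p = (l,c)" and l: "l \<in> I" and c: "c \<le> unitmi i l"
          unfolding I'_def by (rule SigmaE) simp
        show ?thesis
        proof (cases "l = i")
          case True
          have pI: "(l,c) \<in> I'" using \<open>p \<in> I'\<close> p by simp
          have "c = 0 \<or> c = 1" using c True by (auto simp: unitmi_def)
          then show ?thesis
          proof
            assume "c = 0" then show ?thesis using pI ji0 True unfolding p tJ_def by simp
          next
            assume "c = 1" then show ?thesis using pI True unfolding p tJ_def by simp
          qed
        next
          case False
          then have c0: "c = 0" using c by (simp add: unitmi_def)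
          have pI: "(l,c) \<in> I'" using \<open>p \<in> I'\<close> p by simp
          have "l \<in> I0" using l False unfolding I0_def by simp
          then show ?thesis using pI False c0 unfolding p tJ_def by simp
        qed
      qed
    qed
    show "(\<lambda>l\<in>I0. j (l,0), j (i,1)) \<in> P0 \<times> {..n}"
    proof -
      have a: "j (l,0) \<le> \<alpha> l" if "l \<in> I0" for l
        using PiE_mem[OF j, of "(l,0)"] that unfolding I'_def I0_def by (simp add: bdef)
      have b: "j (i,1) \<le> n" using PiE_mem[OF j, of "(i,1)"] iI unfolding I'_def by (simp add: bdef unitmi_def)
      show ?thesis using a b unfolding P0_def by auto
    qed
    show "scale (W0 (fst (\<lambda>l\<in>I0. j (l,0), j (i,1))) * w' (snd (\<lambda>l\<in>I0. j (l,0), j (i,1))))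
         (scale (inverse (x (i,0) - x (i, Suc (snd (\<lambda>l\<in>I0. j (l,0), j (i,1)))))) (f (pt (fst (\<lambda>l\<in>I0. j (l,0), j (i,1))) 0))
        + scale (inverse (x (i, Suc (snd (\<lambda>l\<in>I0. j (l,0), j (i,1)))) - x (i,0))) (f (pt (fst (\<lambda>l\<in>I0. j (l,0), j (i,1))) (Suc (snd (\<lambda>l\<in>I0. j (l,0), j (i,1)))))))
      = scale (\<Prod>p\<in>I'. \<Prod>m\<in>{..\<beta> p}-{j p}. inverse (y (p, j p) - y (p, m))) (G (\<lambda>p\<in>I'. y (p, j p)))"
      using tmq[OF j] by simp
  next
    fix gb assume gb: "gb \<in> P0 \<times> {..n}"
    obtain g b where gbe: "gb = (g,b)" and g: "g \<in> P0" and b: "b \<le> n" using gb by auto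
    have i1: "(i,1) \<in> I'" using iI unfolding I'_def by (simp add: unitmi_def)
    have "(\<lambda>l\<in>I0. tJ (g,b) (l,0)) = g"
    proof (rule ext)
      fix l show "(\<lambda>l\<in>I0. tJ (g,b) (l,0)) l = g l"
      proof (cases "l \<in> I0")
        case True
        then have "(l,0) \<in> I'" "l \<noteq> i" unfolding I'_def I0_def by auto
        then show ?thesis using True unfolding tJ_def by simp
      next
        case False
        then show ?thesis using PiE_arb[OF g[unfolded P0_def] False] by simp
      qed
    qed
    moreover have "tJ (g,b) (i,1) = b" using i1 unfolding tJ_def by simp
    ultimately show "(\<lambda>l\<in>I0. tJ gb (l,0), tJ gb (i,1)) = gb" unfolding gbe by simp
    show "tJ gb \<in> PiE I' (\<lambda>p. {..\<beta> p})"
    proof (rule PiE_I)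
      fix p assume pI: "p \<in> I'"
      then obtain l c where p: "p = (l,c)" and l: "l \<in> I" and c: "c \<le> unitmi i l"
        unfolding I'_def by (rule SigmaE) simp
      show "tJ gb p \<in> {..\<beta> p}"
      proof (cases "l = i")
        case True
        then have "c = 0 \<or> c = 1" using c by (auto simp: unitmi_def)
        then show ?thesis using pI b True unfolding p gbe tJ_def by (auto simp: bdef)
      next
        case False
        then have c0: "c = 0" using c by (simp add: unitmi_def)
        have "l \<in> I0" using l False unfolding I0_def by simp
        then have "g l \<le> \<alpha> l" using PiE_mem[OF g[unfolded P0_def]] by simp
        then show ?thesis using pI False c0 unfolding p gbe tJ_def by (simp add: bdef)
      qed
    next
      fix p assume "p \<notin> I'"
      then show "tJ gb p = undefined" unfolding tJ_def by simp
    qed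
  qed
  also have "\<dots> = (\<Sum>g\<in>P0. scale (W0 g) (\<Sum>b\<le>n. scale (w' b)
         (scale (inverse (x (i,0) - x (i, Suc b))) (f (pt g 0))
        + scale (inverse (x (i, Suc b) - x (i,0))) (f (pt g (Suc b))))))"
    by (simp only: sum.cartesian_product' scale_sum_right scale_scale[symmetric] prod.case_eq_if fst_conv snd_conv)
  also have "\<dots> = (\<Sum>g\<in>P0. scale (W0 g) (\<Sum>a\<le>Suc n. scale (w i a) (f (pt g a))))"
  proof (rule sum.cong[OF refl])
    fix g
    show "scale (W0 g) (\<Sum>b\<le>n. scale (w' b)
         (scale (inverse (x (i,0) - x (i, Suc b))) (f (pt g 0))
        + scale (inverse (x (i, Suc b) - x (i,0))) (f (pt g (Suc b)))))
      = scale (W0 g) (\<Sum>a\<le>Suc n. scale (w i a) (f (pt g a)))"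
      using univ_dd[of "\<lambda>m. x (i,m)" n "\<lambda>a. f (pt g a)", OF inj] unfolding w_def w'_def ai by (rule arg_cong[symmetric])
  qed
  finally show ?thesis unfolding RHS G_def I'_def .
qed

end



definition bet :: "'i \<Rightarrow> ('i \<Rightarrow> nat) \<Rightarrow> ('i \<times> nat \<Rightarrow> nat)" where
  "bet i \<alpha> = (\<lambda>p. if fst p = i then (if snd p = 0 then 0 else \<alpha> i - 1) else \<alpha> (fst p))"

definition Rm :: "'i set \<Rightarrow> 'i \<Rightarrow> ('i \<Rightarrow> nat) \<Rightarrow> ('i \<times> nat \<Rightarrow> 'k) \<Rightarrow> (('i \<times> nat) \<times> nat \<Rightarrow> 'k)" where
  "Rm I i \<alpha> x = (\<lambda>q\<in>(SIGMA p:(SIGMA l:I. {..unitmi i l}). {..bet i \<alpha> p}). x (fst (fst q), snd (fst q) + snd q))"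

lemma bet_bound:
  assumes "1 \<le> \<alpha> i" "c \<le> unitmi i l" "m \<le> bet i \<alpha> (l,c)"
  shows "c + m \<le> \<alpha> l"
  using assms by (cases "l = i") (auto simp: bet_def unitmi_def split: if_splits)

lemma Rm_apply:
  assumes "l \<in> I" "c \<le> unitmi i l" "m \<le> bet i \<alpha> (l,c)"
  shows "Rm I i \<alpha> x ((l,c),m) = x (l, c + m)"
  using assms unfolding Rm_def by simp

lemma sum_bet:
  assumes "finite I" "i \<in> I" "1 \<le> \<alpha> i"
  shows "sum (bet i \<alpha>) (SIGMA l:I. {..unitmi i l}) = sum \<alpha> I - 1"
proof -
  have "sum (bet i \<alpha>) (SIGMA l:I. {..unitmi i l}) = (\<Sum>l\<in>I. \<Sum>c\<le>unitmi i l. bet i \<alpha> (l,c))"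
    using assms by (simp add: sum.Sigma)
  also have "\<dots> = (\<Sum>c\<le>unitmi i i. bet i \<alpha> (i,c)) + (\<Sum>l\<in>I-{i}. \<Sum>c\<le>unitmi i l. bet i \<alpha> (l,c))"
    using sum.remove[OF assms(1,2)] by simp
  also have "(\<Sum>c\<le>unitmi i i. bet i \<alpha> (i,c)) = \<alpha> i - 1"
    by (simp add: unitmi_def bet_def)
  also have "(\<Sum>l\<in>I-{i}. \<Sum>c\<le>unitmi i l. bet i \<alpha> (l,c)) = (\<Sum>l\<in>I-{i}. \<alpha> l)"
    by (rule sum.cong) (auto simp: unitmi_def bet_def)
  also have "sum \<alpha> I = \<alpha> i + (\<Sum>l\<in>I-{i}. \<alpha> l)" using sum.remove[OF assms(1,2)] by simp
  ultimately show ?thesis using assms(3) by simp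
qed

lemma Rm_lt:
  assumes "i \<in> I" "1 \<le> \<alpha> i" "x \<in> sds_lt I \<alpha> U"
  shows "Rm I i \<alpha> x \<in> sds_lt (SIGMA l:I. {..unitmi i l}) (bet i \<alpha>) (sds_lt I (unitmi i) U)"
proof -
  have xP: "x \<in> PiE (SIGMA i:I. {..\<alpha> i}) (\<lambda>_. UNIV)" and xU: "\<And>j. j \<in> PiE I (\<lambda>i. {..\<alpha> i}) \<Longrightarrow> (\<lambda>i\<in>I. x (i, j i)) \<in> U"
    using assms(3) unfolding sds_lt_def by auto
  have "(\<lambda>p\<in>(SIGMA l:I. {..unitmi i l}). Rm I i \<alpha> x (p, j' p)) \<in> sds_lt I (unitmi i) U"
    if j': "j' \<in> PiE (SIGMA l:I. {..unitmi i l}) (\<lambda>p. {..bet i \<alpha> p})" for j'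
  proof -
    have "(\<lambda>l\<in>I. (\<lambda>p\<in>(SIGMA l:I. {..unitmi i l}). Rm I i \<alpha> x (p, j' p)) (l, c l)) \<in> U"
      if c: "c \<in> PiE I (\<lambda>l. {..unitmi i l})" for c
    proof -
      define jj where "jj = (\<lambda>l\<in>I. c l + j' (l, c l))"
      have cl: "c l \<le> unitmi i l" if "l \<in> I" for l using PiE_mem[OF c that] by simp
      have jl: "j' (l, c l) \<le> bet i \<alpha> (l, c l)" if "l \<in> I" for l
        using PiE_mem[OF j', of "(l, c l)"] that cl[OF that] by simp
      have "jj \<in> PiE I (\<lambda>i. {..\<alpha> i})"
        unfolding jj_def using bet_bound[OF assms(2) cl jl] by auto
      moreover have "(\<lambda>l\<in>I. (\<lambda>p\<in>(SIGMA l:I. {..unitmi i l}). Rm I i \<alpha> x (p, j' p)) (l, c l)) = (\<lambda>l\<in>I. x (l, jj l))"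
        unfolding jj_def using cl jl by (auto simp: Rm_apply)
      ultimately show ?thesis using xU by simp
    qed
    then show ?thesis unfolding sds_lt_def by auto
  qed
  moreover have "Rm I i \<alpha> x \<in> PiE (SIGMA p:(SIGMA l:I. {..unitmi i l}). {..bet i \<alpha> p}) (\<lambda>_. UNIV)"
    unfolding Rm_def by auto
  ultimately show ?thesis unfolding sds_lt_def by blast
qed

lemma Rm_gt:
  assumes "i \<in> I" "1 \<le> \<alpha> i" "x \<in> sds_gt I \<alpha> U"
  shows "Rm I i \<alpha> x \<in> sds_gt (SIGMA l:I. {..unitmi i l}) (bet i \<alpha>) (sds_lt I (unitmi i) U)"
proof -
  have lt: "x \<in> sds_lt I \<alpha> U" and d: "\<And>l j m. l \<in> I \<Longrightarrow> j \<le> \<alpha> l \<Longrightarrow> m \<le> \<alpha> l \<Longrightarrow> j \<noteq> m \<Longrightarrow> x (l,j) \<noteq> x (l,m)"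
    using assms(3) unfolding sds_gt_def by auto
  have "Rm I i \<alpha> x (p, j) \<noteq> Rm I i \<alpha> x (p, m)"
    if "p \<in> (SIGMA l:I. {..unitmi i l})" "j \<le> bet i \<alpha> p" "m \<le> bet i \<alpha> p" "j \<noteq> m" for p j m
  proof -
    obtain l c where p: "p = (l,c)" by (cases p)
    have l: "l \<in> I" and c: "c \<le> unitmi i l" using that(1) unfolding p by auto
    show ?thesis using that(2-4) unfolding p Rm_apply[OF l c that(2)[unfolded p]] Rm_apply[OF l c that(3)[unfolded p]]
      using d[OF l bet_bound[OF assms(2) c that(2)[unfolded p]] bet_bound[OF assms(2) c that(3)[unfolded p]]] by simp
  qed
  then show ?thesis using Rm_lt[where \<alpha>=\<alpha>, OF assms(1,2) lt] unfolding sds_gt_def by auto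
qed

lemma Rm_cont:
  assumes "i \<in> I" "1 \<le> \<alpha> i"
  shows "continuous_map (prodtop (SIGMA l:I. {..\<alpha> l})) (prodtop (SIGMA p:(SIGMA l:I. {..unitmi i l}). {..bet i \<alpha> p}))
           (Rm I i \<alpha> :: _ \<Rightarrow> _ \<Rightarrow> 'k::topological_space)"
  unfolding prodtop_def
proof (subst continuous_map_componentwise, intro conjI ballI)
  show "Rm I i \<alpha> ` topspace (product_topology (\<lambda>_. euclidean) (SIGMA l:I. {..\<alpha> l}))
     \<subseteq> extensional (SIGMA p:(SIGMA l:I. {..unitmi i l}). {..bet i \<alpha> p})"
    unfolding Rm_def by auto
  fix q assume q: "q \<in> (SIGMA p:(SIGMA l:I. {..unitmi i l}). {..bet i \<alpha> p})"
  obtain l c m where qe: "q = ((l,c),m)" by (metis prod.collapse)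
  have l: "l \<in> I" and c: "c \<le> unitmi i l" and m: "m \<le> bet i \<alpha> (l,c)" using q unfolding qe by auto
  have mem: "(l, c + m) \<in> (SIGMA l:I. {..\<alpha> l})" using l bet_bound[OF assms(2) c m] by simp
  show "continuous_map (product_topology (\<lambda>_. euclidean) (SIGMA l:I. {..\<alpha> l})) euclidean (\<lambda>x. Rm I i \<alpha> x q)"
    unfolding qe Rm_apply[OF l c m]
    by (rule continuous_map_product_projection[OF mem])
qed

lemma dd_R:
  assumes vs: "vector_space smul" and fin: "finite I" and iI: "i \<in> I" and a1: "1 \<le> \<alpha> i"
    and x: "x \<in> sds_gt I \<alpha> U"
    and g: "\<forall>z\<in>sds_gt I (unitmi i) U. g z = sds_dd smul I (unitmi i) f z"
  shows "sds_dd smul (SIGMA l:I. {..unitmi i l}) (bet i \<alpha>) g (Rm I i \<alpha> x) = sds_dd smul I \<alpha> f x"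
proof -
  define I' where "I' = (SIGMA l:I. {..unitmi i l})"
  define y where "y = Rm I i \<alpha> x"
  have y_gt: "y \<in> sds_gt I' (bet i \<alpha>) (sds_lt I (unitmi i) U)"
    unfolding y_def I'_def by (rule Rm_gt[where \<alpha>=\<alpha>, OF iI a1 x])
  have xd: "\<And>l j m. l \<in> I \<Longrightarrow> j \<le> \<alpha> l \<Longrightarrow> m \<le> \<alpha> l \<Longrightarrow> j \<noteq> m \<Longrightarrow> x (l,j) \<noteq> x (l,m)"
    using x unfolding sds_gt_def by auto
  have "sds_dd smul I' (bet i \<alpha>) g y = sds_dd smul I' (bet i \<alpha>) (sds_dd smul I (unitmi i) f) y"
    unfolding sds_dd_def[of smul I' "bet i \<alpha>"]
  proof (rule sum.cong[OF refl])
    fix j' assume j': "j' \<in> PiE I' (\<lambda>p. {..bet i \<alpha> p})"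
    define z where "z = (\<lambda>p\<in>I'. y (p, j' p))"
    have zlt: "z \<in> sds_lt I (unitmi i) U"
      using y_gt j' unfolding z_def sds_gt_def sds_lt_def[of I' _ "sds_lt I (unitmi i) U"] by blast
    have jb: "j' (l,c) \<le> bet i \<alpha> (l,c)" if "l \<in> I" "c \<le> unitmi i l" for l c
      using PiE_mem[OF j', of "(l,c)"] that unfolding I'_def by simp
    have zv: "z (l,c) = x (l, c + j' (l,c))" if "l \<in> I" "c \<le> unitmi i l" for l c
      using that jb[OF that] unfolding z_def y_def I'_def by (simp add: Rm_apply)
    have "z (l,a) \<noteq> z (l,b)" if "l \<in> I" "a \<le> unitmi i l" "b \<le> unitmi i l" "a \<noteq> b" for l a b
    proof -
      have li: "l = i" using that by (auto simp: unitmi_def split: if_splits)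
      have j0: "j' (i,0) = 0" using jb[OF iI, of 0] by (simp add: bet_def)
      have ne: "a + j' (l,a) \<noteq> b + j' (l,b)"
        using that j0 unfolding li by (auto simp: unitmi_def le_Suc_eq)
      show ?thesis unfolding zv[OF that(1,2)] zv[OF that(1,3)]
        by (rule xd[OF that(1) bet_bound[OF a1 that(2) jb[OF that(1,2)]] bet_bound[OF a1 that(3) jb[OF that(1,3)]] ne])
    qed
    then have "z \<in> sds_gt I (unitmi i) U" using zlt unfolding sds_gt_def by auto
    then show "smul (\<Prod>l\<in>I'. \<Prod>m\<in>{..bet i \<alpha> l} - {j' l}. inverse (y (l, j' l) - y (l, m))) (g (\<lambda>l\<in>I'. y (l, j' l))) =
         smul (\<Prod>l\<in>I'. \<Prod>m\<in>{..bet i \<alpha> l} - {j' l}. inverse (y (l, j' l) - y (l, m))) (sds_dd smul I (unitmi i) f (\<lambda>l\<in>I'. y (l, j' l)))"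
      using g unfolding z_def by simp
  qed
  also have "\<dots> = sds_dd smul I \<alpha> f x"
  proof -
    have ai: "\<alpha> i = Suc (\<alpha> i - 1)" using a1 by simp
    have inj: "inj_on (\<lambda>m. x (i,m)) {..Suc (\<alpha> i - 1)}"
      unfolding ai[symmetric] by (auto simp: inj_on_def intro: ccontr dest: xd[OF iI, rotated 2])
    show ?thesis unfolding I'_def
      by (rule vector_space.dd_step[where \<alpha>=\<alpha> and x=x and n="\<alpha> i - 1", OF vs fin iI ai inj])
         (auto simp: y_def Rm_apply bet_def)
  qed
  finally show ?thesis unfolding I'_def y_def .
qed

lemma sds_ext_prop:
  assumes "\<exists>g. continuous_map (subtopology (prodtop (SIGMA i:I. {..\<alpha> i})) (sds_lt I \<alpha> U)) euclidean g
             \<and> (\<forall>x\<in>sds_gt I \<alpha> U. g x = sds_dd smul I \<alpha> f x)"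
  shows "continuous_map (subtopology (prodtop (SIGMA i:I. {..\<alpha> i})) (sds_lt I \<alpha> U)) euclidean (sds_ext smul I U f \<alpha>)
     \<and> (\<forall>x\<in>sds_gt I \<alpha> U. sds_ext smul I U f \<alpha> x = sds_dd smul I \<alpha> f x)"
  unfolding sds_ext_def by (rule someI_ex[OF assms])

lemma sum_unitmi: "finite I \<Longrightarrow> i \<in> I \<Longrightarrow> sum (unitmi i) I = 1"
  unfolding unitmi_def by simp

lemma ext_unit:
  assumes "finite I" "i \<in> I" "sds_C smul I U f 1"
  shows "continuous_map (subtopology (prodtop (SIGMA l:I. {..unitmi i l})) (sds_lt I (unitmi i) U)) euclidean (sds_ext smul I U f (unitmi i))
     \<and> (\<forall>x\<in>sds_gt I (unitmi i) U. sds_ext smul I U f (unitmi i) x = sds_dd smul I (unitmi i) f x)"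
  using assms(3) sum_unitmi[OF assms(1,2)] by (intro sds_ext_prop) simp

lemma Rm_cont_sub:
  assumes "i \<in> I" "1 \<le> \<alpha> i"
  shows "continuous_map (subtopology (prodtop (SIGMA l:I. {..\<alpha> l})) (sds_lt I \<alpha> U))
     (subtopology (prodtop (SIGMA p:(SIGMA l:I. {..unitmi i l}). {..bet i \<alpha> p})) (sds_lt (SIGMA l:I. {..unitmi i l}) (bet i \<alpha>) (sds_lt I (unitmi i) U)))
     (Rm I i \<alpha> :: _ \<Rightarrow> _ \<Rightarrow> 'k::topological_space)"
  by (rule continuous_map_into_subtopology[OF continuous_map_from_subtopology[OF Rm_cont[where \<alpha>=\<alpha>, OF assms]]])
     (auto intro: Rm_lt[where \<alpha>=\<alpha>, OF assms])

lemma exists_pos: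
  assumes "finite I" "sum \<alpha> I = Suc k"
  obtains i where "i \<in> I" "1 \<le> \<alpha> i"
proof -
  have "\<exists>i\<in>I. \<alpha> i \<noteq> 0"
  proof (rule ccontr)
    assume "\<not> ?thesis"
    then have "sum \<alpha> I = 0" by simp
    then show False using assms(2) by simp
  qed
  then show ?thesis using that by auto
qed

lemma partA:
  fixes smul :: "'k::{field,topological_space} \<Rightarrow> 'f \<Rightarrow> 'f::{ab_group_add,topological_space}" and I :: "'i set"
  assumes vs: "vector_space smul" and fin: "finite I" and f1: "sds_C smul I U f 1"
  shows "(\<forall>i\<in>I. sds_C smul (SIGMA l:I. {..unitmi i l}) (sds_lt I (unitmi i) U) (sds_ext smul I U f (unitmi i)) k)
     \<Longrightarrow> sds_C smul I U f (Suc k)"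
proof (induction k)
  case 0
  then show ?case using f1 by simp
next
  case (Suc k)
  have IH: "sds_C smul I U f (Suc k)" using Suc by simp
  have "\<exists>G. continuous_map (subtopology (prodtop (SIGMA i:I. {..\<alpha> i})) (sds_lt I \<alpha> U)) euclidean G
             \<and> (\<forall>x\<in>sds_gt I \<alpha> U. G x = sds_dd smul I \<alpha> f x)"
    if sa: "sum \<alpha> I = Suc (Suc k)" for \<alpha>
  proof -
    obtain i where iI: "i \<in> I" and a1: "1 \<le> \<alpha> i" using exists_pos[OF fin sa] .
    define I' where "I' = (SIGMA l:I. {..unitmi i l})"
    define g where "g = sds_ext smul I U f (unitmi i)"
    have sb: "sum (bet i \<alpha>) I' = Suc k" unfolding I'_def using sum_bet[where \<alpha>=\<alpha>, OF fin iI a1] sa by simp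
    have "sds_C smul I' (sds_lt I (unitmi i) U) g (Suc k)"
      using Suc.prems iI unfolding I'_def g_def by blast
    then obtain G0 where G0c: "continuous_map (subtopology (prodtop (SIGMA p:I'. {..bet i \<alpha> p})) (sds_lt I' (bet i \<alpha>) (sds_lt I (unitmi i) U))) euclidean G0"
        and G0e: "\<forall>y\<in>sds_gt I' (bet i \<alpha>) (sds_lt I (unitmi i) U). G0 y = sds_dd smul I' (bet i \<alpha>) g y"
      using sb by auto
    have ge: "\<forall>z\<in>sds_gt I (unitmi i) U. g z = sds_dd smul I (unitmi i) f z"
      using ext_unit[OF fin iI f1] unfolding g_def by blast
    show ?thesis
    proof (intro exI conjI ballI)
      show "continuous_map (subtopology (prodtop (SIGMA i:I. {..\<alpha> i})) (sds_lt I \<alpha> U)) euclidean (G0 \<circ> Rm I i \<alpha>)"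
        by (rule continuous_map_compose[OF Rm_cont_sub[where \<alpha>=\<alpha>, OF iI a1] G0c[unfolded I'_def]])
      fix x assume x: "x \<in> sds_gt I \<alpha> U"
      have "G0 (Rm I i \<alpha> x) = sds_dd smul I' (bet i \<alpha>) g (Rm I i \<alpha> x)"
        using G0e Rm_gt[where \<alpha>=\<alpha>, OF iI a1 x] unfolding I'_def by blast
      also have "\<dots> = sds_dd smul I \<alpha> f x"
        unfolding I'_def by (rule dd_R[where \<alpha>=\<alpha>, OF vs fin iI a1 x ge])
      finally show "(G0 \<circ> Rm I i \<alpha>) x = sds_dd smul I \<alpha> f x" by simp
    qed
  qed
  then show ?case using IH by simp
qed



lemma infinite_open:
  assumes tf: "topological_field TYPE('k::{field,t2_space})" and V: "open (V::'k set)" "V \<noteq> {}"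
  shows "infinite V"
proof
  assume fV: "finite V"
  obtain v where v: "v \<in> V" using V by auto
  have "V - (V - {v}) = {v}" using v by auto
  moreover have "open (V - (V - {v}))" using V fV by (intro open_Diff finite_imp_closed) auto
  ultimately have ov: "open {v}" by simp
  have addc: "continuous_on UNIV (\<lambda>p::'k\<times>'k. fst p + snd p)" using tf unfolding topological_field_def by simp
  have tc: "continuous_on UNIV (\<lambda>t::'k. t + c)" for c
  proof -
    have "continuous_on UNIV (\<lambda>t::'k. (t, c))" by (intro continuous_on_Pair continuous_on_id continuous_on_const)
    from continuous_on_compose2[OF addc this] show ?thesis by simp
  qed
  have os: "open {s}" for s :: 'k
  proof -
    have "(\<lambda>t. t + (v - s)) -` {v} = {s}" by auto
    then show ?thesis using open_vimage[OF ov tc[of "v - s"]] by simp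
  qed
  have "open S" for S :: "'k set"
  proof -
    have "S = (\<Union>s\<in>S. {s})" by auto
    then show ?thesis using os by (metis open_UN)
  qed
  then show False using tf unfolding topological_field_def by blast
qed

lemma choose_inj:
  assumes "finite J" "\<forall>p\<in>J. infinite (V p)"
  shows "\<exists>y\<in>PiE J V. inj_on y J"
  using assms
proof (induction J rule: finite_induct)
  case empty
  then show ?case by auto
next
  case (insert p J)
  then obtain y where y: "y \<in> PiE J V" and inj: "inj_on y J" by auto
  have "infinite (V p - y ` J)" using insert by (intro Diff_infinite_finite) auto
  then obtain v where v: "v \<in> V p" "v \<notin> y ` J" by (metis Diff_iff ex_in_conv finite.emptyI)
  have yp: "y p = undefined" using PiE_arb[OF y insert.hyps(2)] .
  show ?case
  proof (intro bexI[of _ "y(p := v)"])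
    show "y(p := v) \<in> PiE (insert p J) V" using y v(1) yp by (auto simp: PiE_iff extensional_def)
    show "inj_on (y(p := v)) (insert p J)"
      using inj v(2) insert.hyps(2) by (auto simp: inj_on_def)
  qed
qed

lemma proj_cont:
  assumes "j \<in> PiE I (\<lambda>i. {..\<alpha> i})"
  shows "continuous_map (prodtop (SIGMA i:I. {..\<alpha> i})) (prodtop I) (\<lambda>x. (\<lambda>i\<in>I. x (i, j i)))"
  unfolding prodtop_def
proof (subst continuous_map_componentwise, intro conjI ballI)
  show "(\<lambda>x. \<lambda>i\<in>I. x (i, j i)) ` topspace (product_topology (\<lambda>_. euclidean) (SIGMA i:I. {..\<alpha> i})) \<subseteq> extensional I"
    by auto
  fix k assume k: "k \<in> I"
  have mem: "(k, j k) \<in> (SIGMA i:I. {..\<alpha> i})" using k PiE_mem[OF assms k] by simp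
  show "continuous_map (product_topology (\<lambda>_. euclidean) (SIGMA i:I. {..\<alpha> i})) euclidean (\<lambda>x. (\<lambda>i\<in>I. x (i, j i)) k)"
    using k continuous_map_product_projection[OF mem] by simp
qed

lemma topspace_prodtop [simp]: "topspace (prodtop J) = PiE J (\<lambda>_. UNIV)"
  unfolding prodtop_def by simp

lemma open_sds_lt:
  fixes U :: "('i \<Rightarrow> 'k::topological_space) set"
  assumes "finite I" "openin (prodtop I) U"
  shows "openin (prodtop (SIGMA i:I. {..\<alpha> i})) (sds_lt I \<alpha> U)"
proof -
  define X where "X = (prodtop (SIGMA i:I. {..\<alpha> i}) :: ('i \<times> nat \<Rightarrow> 'k) topology)"
  define P where "P = PiE I (\<lambda>i. {..\<alpha> i})"
  have "sds_lt I \<alpha> U = \<Inter> (insert (topspace X) ((\<lambda>j. {x \<in> topspace X. (\<lambda>i\<in>I. x (i, j i)) \<in> U}) ` P))"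
    unfolding sds_lt_def X_def P_def by auto
  moreover have "openin X (\<Inter> (insert (topspace X) ((\<lambda>j. {x \<in> topspace X. (\<lambda>i\<in>I. x (i, j i)) \<in> U}) ` P)))"
  proof (rule openin_Inter)
    show "finite (insert (topspace X) ((\<lambda>j. {x \<in> topspace X. (\<lambda>i\<in>I. x (i, j i)) \<in> U}) ` P))"
      unfolding P_def using assms(1) by (simp add: finite_PiE)
    show "insert (topspace X) ((\<lambda>j. {x \<in> topspace X. (\<lambda>i\<in>I. x (i, j i)) \<in> U}) ` P) \<noteq> {}" by simp
    fix S assume "S \<in> insert (topspace X) ((\<lambda>j. {x \<in> topspace X. (\<lambda>i\<in>I. x (i, j i)) \<in> U}) ` P)"
    then show "openin X S"
    proof
      assume "S = topspace X" then show ?thesis by simp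
    next
      assume "S \<in> (\<lambda>j. {x \<in> topspace X. (\<lambda>i\<in>I. x (i, j i)) \<in> U}) ` P"
      then obtain j where j: "j \<in> P" and S: "S = {x \<in> topspace X. (\<lambda>i\<in>I. x (i, j i)) \<in> U}" by auto
      show ?thesis unfolding S X_def
        by (rule openin_continuous_map_preimage[OF proj_cont assms(2)]) (use j P_def in simp)
    qed
  qed
  ultimately show ?thesis unfolding X_def by simp
qed

lemma lt_prod_mem:
  assumes "x \<in> sds_lt I \<alpha> (PiE I Us)" "l \<in> I" "m \<le> \<alpha> l"
  shows "x (l,m) \<in> Us l"
proof -
  define j where "j = (\<lambda>i\<in>I. if i = l then m else 0)"
  have "j \<in> PiE I (\<lambda>i. {..\<alpha> i})" unfolding j_def using assms(3) by auto
  then have "(\<lambda>i\<in>I. x (i, j i)) \<in> PiE I Us" using assms(1) unfolding sds_lt_def by blast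
  then have "(\<lambda>i\<in>I. x (i, j i)) l \<in> Us l" using assms(2) by (rule PiE_mem)
  then show ?thesis using assms(2) unfolding j_def by simp
qed

lemma dense_gt:
  fixes U :: "('i \<Rightarrow> 'k::{field,t2_space}) set"
  assumes tf: "topological_field TYPE('k)" and fin: "finite I"
    and hU: "openin (prodtop I) U \<or> (\<exists>Us. (\<forall>i\<in>I. Us i \<subseteq> closure (interior (Us i))) \<and> U = PiE I Us)"
    and x: "x \<in> sds_lt I \<alpha> U" and N: "openin (prodtop (SIGMA i:I. {..\<alpha> i})) N" and xN: "x \<in> N"
  shows "\<exists>y\<in>N. y \<in> sds_gt I \<alpha> U"
proof -
  define J where "J = (SIGMA i:I. {..\<alpha> i})"
  have finJ: "finite J" unfolding J_def using fin by auto
  have "\<exists>V. (\<forall>p\<in>J. open (V p) \<and> V p \<noteq> {}) \<and> PiE J V \<subseteq> N \<inter> sds_lt I \<alpha> U"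
    using hU
  proof
    assume Uo: "openin (prodtop I) U"
    have "openin (prodtop J) (N \<inter> sds_lt I \<alpha> U)"
      unfolding J_def using N open_sds_lt[OF fin Uo] by (rule openin_Int)
    then obtain V where V: "\<forall>p\<in>J. openin euclidean (V p)" "x \<in> PiE J V" "PiE J V \<subseteq> N \<inter> sds_lt I \<alpha> U"
      using x xN unfolding prodtop_def openin_product_topology_alt by blast
    show ?thesis using V by (intro exI[of _ V]) (auto simp: PiE_iff)
  next
    assume "\<exists>Us. (\<forall>i\<in>I. Us i \<subseteq> closure (interior (Us i))) \<and> U = PiE I Us"
    then obtain Us where Us: "\<forall>i\<in>I. Us i \<subseteq> closure (interior (Us i))" and Ue: "U = PiE I Us" by blast
    obtain V where V: "\<forall>p\<in>J. openin euclidean (V p)" "x \<in> PiE J V" "PiE J V \<subseteq> N"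
      using N xN unfolding prodtop_def openin_product_topology_alt J_def by blast
    define V' where "V' p = V p \<inter> interior (Us (fst p))" for p
    have "open (V' p) \<and> V' p \<noteq> {}" if p: "p \<in> J" for p
    proof
      show "open (V' p)" unfolding V'_def using V(1) p by auto
      obtain l m where pe: "p = (l,m)" and l: "l \<in> I" and m: "m \<le> \<alpha> l" using p unfolding J_def by auto
      have "x p \<in> Us l" unfolding pe using lt_prod_mem[OF x[unfolded Ue] l m] .
      then have "x p \<in> closure (interior (Us l))" using Us l by auto
      moreover have "x p \<in> V p" using V(2) p by auto
      ultimately have "V p \<inter> closure (interior (Us l)) \<noteq> {}" by auto
      then have "V p \<inter> interior (Us l) \<noteq> {}" using open_Int_closure_eq_empty[of "V p" "interior (Us l)"] V(1) p by auto
      then show "V' p \<noteq> {}" unfolding V'_def pe by simp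
    qed
    moreover have "PiE J V' \<subseteq> N \<inter> sds_lt I \<alpha> U"
    proof
      fix y assume y: "y \<in> PiE J V'"
      have "y \<in> PiE J V" using y unfolding V'_def by (auto simp: PiE_iff)
      then have "y \<in> N" using V(3) by auto
      moreover have "y \<in> sds_lt I \<alpha> U"
        unfolding sds_lt_def Ue
      proof (intro CollectI conjI ballI)
        show "y \<in> PiE (SIGMA i:I. {..\<alpha> i}) (\<lambda>_. UNIV)" using y unfolding J_def by (auto simp: PiE_iff)
        fix j assume j: "j \<in> PiE I (\<lambda>i. {..\<alpha> i})"
        have "y (i, j i) \<in> Us i" if "i \<in> I" for i
        proof -
          have "(i, j i) \<in> J" unfolding J_def using that PiE_mem[OF j that] by auto
          then have "y (i, j i) \<in> V' (i, j i)" using y by auto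
          then show ?thesis unfolding V'_def using interior_subset by auto
        qed
        then show "(\<lambda>i\<in>I. y (i, j i)) \<in> PiE I Us" by auto
      qed
      ultimately show "y \<in> N \<inter> sds_lt I \<alpha> U" by simp
    qed
    ultimately show ?thesis by blast
  qed
  then obtain V where V: "\<forall>p\<in>J. open (V p) \<and> V p \<noteq> {}" "PiE J V \<subseteq> N \<inter> sds_lt I \<alpha> U" by blast
  have "\<forall>p\<in>J. infinite (V p)" using V(1) infinite_open[OF tf] by blast
  then obtain y where y: "y \<in> PiE J V" and inj: "inj_on y J" using choose_inj[OF finJ] by blast
  have yN: "y \<in> N" and ylt: "y \<in> sds_lt I \<alpha> U" using V(2) y by auto
  have "y \<in> sds_gt I \<alpha> U"
    unfolding sds_gt_def using ylt inj unfolding J_def by (auto simp: inj_on_def)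
  then show ?thesis using yN by blast
qed

lemma cont_uniq:
  fixes g1 g2 :: "_ \<Rightarrow> 'f::t2_space"
  assumes c1: "continuous_map (subtopology X S) euclidean g1"
    and c2: "continuous_map (subtopology X S) euclidean g2"
    and S: "S \<subseteq> topspace X" and D: "\<forall>x\<in>S. \<forall>N. openin X N \<and> x \<in> N \<longrightarrow> (\<exists>y\<in>N. y \<in> D)"
    and DS: "D \<subseteq> S" and eq: "\<forall>x\<in>D. g1 x = g2 x" and x: "x \<in> S"
  shows "g1 x = g2 x"
proof (rule ccontr)
  assume ne: "g1 x \<noteq> g2 x"
  obtain O1 O2 where O: "open O1" "open O2" "g1 x \<in> O1" "g2 x \<in> O2" "O1 \<inter> O2 = {}"
    using hausdorff[OF ne] by blast
  have "openin (subtopology X S) {z \<in> topspace (subtopology X S). g1 z \<in> O1}"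
    using openin_continuous_map_preimage[OF c1] O(1) by simp
  then obtain T1 where T1: "openin X T1" "{z \<in> topspace (subtopology X S). g1 z \<in> O1} = T1 \<inter> S"
    unfolding openin_subtopology by blast
  have "openin (subtopology X S) {z \<in> topspace (subtopology X S). g2 z \<in> O2}"
    using openin_continuous_map_preimage[OF c2] O(2) by simp
  then obtain T2 where T2: "openin X T2" "{z \<in> topspace (subtopology X S). g2 z \<in> O2} = T2 \<inter> S"
    unfolding openin_subtopology by blast
  have xts: "x \<in> topspace (subtopology X S)" using x S by auto
  have "x \<in> T1 \<inter> T2" using T1(2) T2(2) xts O(3,4) by blast
  moreover have "openin X (T1 \<inter> T2)" using T1(1) T2(1) by auto
  ultimately obtain y where y: "y \<in> T1 \<inter> T2" "y \<in> D" using D x by blast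
  have "y \<in> S" using y DS by auto
  then have "g1 y \<in> O1" "g2 y \<in> O2" using y T1(2) T2(2) by blast+
  then show False using eq y(2) O(5) by auto
qed



lemma holder_imp:
  assumes H: "holder av smul J V g \<sigma>" and eq: "\<forall>x\<in>V. g x = g' x"
  shows "holder av smul J V g' \<sigma>"
  unfolding holder_def
proof (intro ballI allI impI)
  fix x0 q assume x0: "x0 \<in> V" and q: "gaugeF av smul q"
  obtain p W where pW: "gaugeE av J p" "W \<subseteq> V" "\<exists>N. openin (prodtop J) N \<and> x0 \<in> N \<and> N \<inter> V \<subseteq> W"
     "\<forall>x\<in>W. \<forall>y\<in>W. q (g y - g x) \<le> p (\<lambda>j\<in>J. y j - x j) powr \<sigma>"
    using H x0 q unfolding holder_def by meson
  have "\<forall>x\<in>W. \<forall>y\<in>W. q (g' y - g' x) \<le> p (\<lambda>j\<in>J. y j - x j) powr \<sigma>"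
    using pW(2,4) eq by (metis subsetD)
  then show "\<exists>p W. gaugeE av J p \<and> W \<subseteq> V \<and> (\<exists>N. openin (prodtop J) N \<and> x0 \<in> N \<and> N \<inter> V \<subseteq> W) \<and>
      (\<forall>x\<in>W. \<forall>y\<in>W. q (g' y - g' x) \<le> p (\<lambda>j\<in>J. y j - x j) powr \<sigma>)"
    using pW(1-3) by blast
qed

lemma holder_reindex:
  fixes av :: "'k::{field,topological_space} \<Rightarrow> real" and R :: "('j \<Rightarrow> 'k) \<Rightarrow> ('j2 \<Rightarrow> 'k)"
    and G :: "('j2 \<Rightarrow> 'k) \<Rightarrow> 'f::{ab_group_add,topological_space}"
  assumes H: "holder av smul J' V' G \<sigma>"
    and Rdef: "\<And>x. R x = (\<lambda>q\<in>J'. x (\<tau> q))" and \<tau>: "\<And>q. q \<in> J' \<Longrightarrow> \<tau> q \<in> J"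
    and Rc: "continuous_map (prodtop J) (prodtop J') R"
    and RV: "\<forall>x\<in>V. R x \<in> V'" and VJ: "V \<subseteq> PiE J (\<lambda>_. UNIV)"
  shows "holder av smul J V (G \<circ> R) \<sigma>"
  unfolding holder_def
proof (intro ballI allI impI)
  fix x0 q assume x0: "x0 \<in> V" and q: "gaugeF av smul q"
  have Rx0: "R x0 \<in> V'" using RV x0 by auto
  obtain p' W' N' where p': "gaugeE av J' p'" and W': "W' \<subseteq> V'" and N': "openin (prodtop J') N'" "R x0 \<in> N'" "N' \<inter> V' \<subseteq> W'"
     and ineq: "\<forall>x\<in>W'. \<forall>y\<in>W'. q (G y - G x) \<le> p' (\<lambda>j\<in>J'. y j - x j) powr \<sigma>"
    using H Rx0 q unfolding holder_def by meson
  define p where "p x = p' (R x)" for x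
  define W where "W = {x\<in>V. R x \<in> W'}"
  define N where "N = {x \<in> topspace (prodtop J). R x \<in> N'}"
  have RP: "R x \<in> PiE J' (\<lambda>_. UNIV)" for x unfolding Rdef by auto
  have "gaugeE av J p"
    unfolding gaugeE_def
  proof (intro conjI ballI allI impI)
    fix x :: "'j \<Rightarrow> 'k" assume "x \<in> PiE J (\<lambda>_. UNIV)"
    show "0 \<le> p x" unfolding p_def using p' RP unfolding gaugeE_def by blast
  next
    fix t :: 'k and x :: "'j \<Rightarrow> 'k" assume "x \<in> PiE J (\<lambda>_. UNIV)"
    have "R (\<lambda>j\<in>J. t * x j) = (\<lambda>j\<in>J'. t * R x j)" unfolding Rdef using \<tau> by (auto simp: fun_eq_iff)
    then show "p (\<lambda>j\<in>J. t * x j) = av t * p x" unfolding p_def using p' RP unfolding gaugeE_def by simp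
  next
    fix r :: real assume r: "0 < r"
    obtain S' where S': "openin (prodtop J') S'" "(\<lambda>j\<in>J'. 0) \<in> S'" "\<forall>x\<in>S'. p' x < r"
      using p' r unfolding gaugeE_def by blast
    have R0: "R (\<lambda>j\<in>J. 0) = (\<lambda>j\<in>J'. 0)" unfolding Rdef using \<tau> by (auto simp: fun_eq_iff)
    show "\<exists>S. openin (prodtop J) S \<and> (\<lambda>j\<in>J. 0) \<in> S \<and> (\<forall>x\<in>S. p x < r)"
    proof (intro exI conjI ballI)
      show "openin (prodtop J) {x \<in> topspace (prodtop J). R x \<in> S'}"
        by (rule openin_continuous_map_preimage[OF Rc S'(1)])
      show "(\<lambda>j\<in>J. 0) \<in> {x \<in> topspace (prodtop J). R x \<in> S'}" using R0 S'(2) by auto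
      fix x assume "x \<in> {x \<in> topspace (prodtop J). R x \<in> S'}"
      then show "p x < r" unfolding p_def using S'(3) by auto
    qed
  qed
  moreover have "W \<subseteq> V" unfolding W_def by auto
  moreover have "openin (prodtop J) N \<and> x0 \<in> N \<and> N \<inter> V \<subseteq> W"
  proof (intro conjI)
    show "openin (prodtop J) N" unfolding N_def by (rule openin_continuous_map_preimage[OF Rc N'(1)])
    show "x0 \<in> N" unfolding N_def using x0 VJ N'(2) by auto
    show "N \<inter> V \<subseteq> W" unfolding N_def W_def using N'(3) RV by auto
  qed
  moreover have "\<forall>x\<in>W. \<forall>y\<in>W. q ((G \<circ> R) y - (G \<circ> R) x) \<le> p (\<lambda>j\<in>J. y j - x j) powr \<sigma>"
  proof (intro ballI)
    fix x y assume x: "x \<in> W" and y: "y \<in> W"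
    have "R (\<lambda>j\<in>J. y j - x j) = (\<lambda>j\<in>J'. R y j - R x j)" unfolding Rdef using \<tau> by (auto simp: fun_eq_iff)
    then show "q ((G \<circ> R) y - (G \<circ> R) x) \<le> p (\<lambda>j\<in>J. y j - x j) powr \<sigma>"
      unfolding p_def using ineq x y unfolding W_def by simp
  qed
  ultimately show "\<exists>p W. gaugeE av J p \<and> W \<subseteq> V \<and> (\<exists>N. openin (prodtop J) N \<and> x0 \<in> N \<and> N \<inter> V \<subseteq> W) \<and>
      (\<forall>x\<in>W. \<forall>y\<in>W. q ((G \<circ> R) y - (G \<circ> R) x) \<le> p (\<lambda>j\<in>J. y j - x j) powr \<sigma>)"
    by blast
qed

lemma sds_C_mono: "sds_C smul I U f k \<Longrightarrow> j \<le> k \<Longrightarrow> sds_C smul I U f j"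
proof (induction k arbitrary: j)
  case 0
  then show ?case by simp
next
  case (Suc k)
  then show ?case by (cases "j = Suc k") auto
qed

lemma sds_C_ext:
  assumes "sds_C smul I U f k" "1 \<le> sum \<alpha> I" "sum \<alpha> I \<le> k"
  shows "continuous_map (subtopology (prodtop (SIGMA i:I. {..\<alpha> i})) (sds_lt I \<alpha> U)) euclidean (sds_ext smul I U f \<alpha>)
     \<and> (\<forall>x\<in>sds_gt I \<alpha> U. sds_ext smul I U f \<alpha> x = sds_dd smul I \<alpha> f x)"
proof -
  obtain m where m: "sum \<alpha> I = Suc m" using assms(2) by (metis Suc_pred' less_eq_Suc_le One_nat_def)
  have "Suc m \<le> k" using assms(3) m by simp
  from sds_C_mono[OF assms(1) this] have "sds_C smul I U f (Suc m)" .
  then show ?thesis using m by (intro sds_ext_prop) simp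
qed

lemma lt_sub: "sds_lt I \<alpha> U \<subseteq> topspace (prodtop (SIGMA i:I. {..\<alpha> i}))"
  unfolding sds_lt_def by auto

lemma partB:
  fixes smul :: "'k::{field,t2_space} \<Rightarrow> 'f \<Rightarrow> 'f::{ab_group_add,t2_space}" and I :: "'i set" and av :: "'k \<Rightarrow> real"
  assumes tf: "topological_field TYPE('k)" and vs: "vector_space smul" and fin: "finite I"
    and hU: "openin (prodtop I) U \<or> (\<exists>Us. (\<forall>i\<in>I. Us i \<subseteq> closure (interior (Us i))) \<and> U = PiE I Us)"
    and f1: "sds_CH av smul I U f 1 \<sigma>"
    and gk: "\<forall>i\<in>I. sds_CH av smul (SIGMA l:I. {..unitmi i l}) (sds_lt I (unitmi i) U) (sds_ext smul I U f (unitmi i)) k \<sigma>"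
  shows "sds_CH av smul I U f (Suc k) \<sigma>"
proof -
  have C1: "sds_C smul I U f 1" using f1 unfolding sds_CH_def by simp
  have CS: "sds_C smul I U f (Suc k)"
    using partA[OF vs fin C1] gk unfolding sds_CH_def by blast
  have hf: "holder av smul I U f \<sigma>" using f1 unfolding sds_CH_def by simp
  have "holder av smul (SIGMA i:I. {..\<alpha> i}) (sds_lt I \<alpha> U) (sds_ext smul I U f \<alpha>) \<sigma>"
    if a1: "1 \<le> sum \<alpha> I" and ak: "sum \<alpha> I \<le> Suc k" for \<alpha>
  proof (cases "sum \<alpha> I = 1")
    case True
    then show ?thesis using f1 unfolding sds_CH_def by simp
  next
    case False
    then obtain m where m: "sum \<alpha> I = Suc m" "1 \<le> m" "m \<le> k" using a1 ak
      by (metis Suc_le_mono Suc_pred' less_eq_Suc_le One_nat_def le_antisym not_less_eq_eq)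
    obtain i where iI: "i \<in> I" and ai: "1 \<le> \<alpha> i" using exists_pos[OF fin m(1)] .
    define I' where "I' = (SIGMA l:I. {..unitmi i l})"
    define g where "g = sds_ext smul I U f (unitmi i)"
    define U' where "U' = sds_lt I (unitmi i) U"
    define \<beta> where "\<beta> = bet i \<alpha>"
    have sb: "sum \<beta> I' = m" unfolding I'_def \<beta>_def using sum_bet[where \<alpha>=\<alpha>, OF fin iI ai] m by simp
    have gCH: "sds_CH av smul I' U' g k \<sigma>" using gk iI unfolding I'_def U'_def g_def by blast
    have hg: "holder av smul (SIGMA p:I'. {..\<beta> p}) (sds_lt I' \<beta> U') (sds_ext smul I' U' g \<beta>) \<sigma>"
      using gCH sb m unfolding sds_CH_def by simp
    have eg: "continuous_map (subtopology (prodtop (SIGMA p:I'. {..\<beta> p})) (sds_lt I' \<beta> U')) euclidean (sds_ext smul I' U' g \<beta>)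
       \<and> (\<forall>y\<in>sds_gt I' \<beta> U'. sds_ext smul I' U' g \<beta> y = sds_dd smul I' \<beta> g y)"
      using gCH sb m unfolding sds_CH_def by (intro sds_C_ext) auto
    have ge: "\<forall>z\<in>sds_gt I (unitmi i) U. g z = sds_dd smul I (unitmi i) f z"
      using ext_unit[OF fin iI C1] unfolding g_def by blast
    define G where "G = sds_ext smul I' U' g \<beta> \<circ> Rm I i \<alpha>"
    have Gc: "continuous_map (subtopology (prodtop (SIGMA i:I. {..\<alpha> i})) (sds_lt I \<alpha> U)) euclidean G"
      unfolding G_def using continuous_map_compose[OF Rm_cont_sub[where \<alpha>=\<alpha>, OF iI ai] eg[THEN conjunct1, unfolded I'_def U'_def \<beta>_def]]
      unfolding I'_def U'_def \<beta>_def .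
    have Ge: "\<forall>x\<in>sds_gt I \<alpha> U. G x = sds_dd smul I \<alpha> f x"
    proof
      fix x assume x: "x \<in> sds_gt I \<alpha> U"
      have "G x = sds_dd smul I' \<beta> g (Rm I i \<alpha> x)"
        unfolding G_def using eg Rm_gt[where \<alpha>=\<alpha>, OF iI ai x] unfolding I'_def U'_def \<beta>_def by simp
      also have "\<dots> = sds_dd smul I \<alpha> f x"
        unfolding I'_def \<beta>_def by (rule dd_R[where \<alpha>=\<alpha>, OF vs fin iI ai x ge])
      finally show "G x = sds_dd smul I \<alpha> f x" .
    qed
    have ef: "continuous_map (subtopology (prodtop (SIGMA i:I. {..\<alpha> i})) (sds_lt I \<alpha> U)) euclidean (sds_ext smul I U f \<alpha>)
       \<and> (\<forall>x\<in>sds_gt I \<alpha> U. sds_ext smul I U f \<alpha> x = sds_dd smul I \<alpha> f x)"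
      using sds_C_ext[OF CS a1 ak] .
    have eq: "\<forall>x\<in>sds_lt I \<alpha> U. G x = sds_ext smul I U f \<alpha> x"
    proof
      fix x assume x: "x \<in> sds_lt I \<alpha> U"
      show "G x = sds_ext smul I U f \<alpha> x"
      proof (rule cont_uniq[OF Gc ef[THEN conjunct1] lt_sub _ _ _ x])
        show "\<forall>x\<in>sds_lt I \<alpha> U. \<forall>N. openin (prodtop (SIGMA i:I. {..\<alpha> i})) N \<and> x \<in> N \<longrightarrow> (\<exists>y\<in>N. y \<in> sds_gt I \<alpha> U)"
          using dense_gt[OF tf fin hU] by blast
        show "sds_gt I \<alpha> U \<subseteq> sds_lt I \<alpha> U" unfolding sds_gt_def by auto
        show "\<forall>x\<in>sds_gt I \<alpha> U. G x = sds_ext smul I U f \<alpha> x" using Ge ef by simp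
      qed
    qed
    have "holder av smul (SIGMA i:I. {..\<alpha> i}) (sds_lt I \<alpha> U) G \<sigma>"
      unfolding G_def
    proof (rule holder_reindex[OF hg])
      show "Rm I i \<alpha> x = (\<lambda>q\<in>(SIGMA p:I'. {..\<beta> p}). x (fst (fst q), snd (fst q) + snd q))" for x :: "_ \<Rightarrow> 'k"
        unfolding Rm_def I'_def \<beta>_def ..
      show "(fst (fst q), snd (fst q) + snd q) \<in> (SIGMA i:I. {..\<alpha> i})" if "q \<in> (SIGMA p:I'. {..\<beta> p})" for q
        using that bet_bound[where \<alpha>=\<alpha>, OF ai] unfolding I'_def \<beta>_def by auto
      show "continuous_map (prodtop (SIGMA i:I. {..\<alpha> i})) (prodtop (SIGMA p:I'. {..\<beta> p})) (Rm I i \<alpha>)"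
        unfolding I'_def \<beta>_def by (rule Rm_cont[where \<alpha>=\<alpha>, OF iI ai])
      show "\<forall>x\<in>sds_lt I \<alpha> U. Rm I i \<alpha> x \<in> sds_lt I' \<beta> U'"
        unfolding I'_def \<beta>_def U'_def using Rm_lt[where \<alpha>=\<alpha>, OF iI ai] by blast
      show "sds_lt I \<alpha> U \<subseteq> PiE (SIGMA i:I. {..\<alpha> i}) (\<lambda>_. UNIV)" unfolding sds_lt_def by auto
    qed
    then show ?thesis using holder_imp eq by blast
  qed
  then show ?thesis unfolding sds_CH_def using CS hf by auto
qed


theorem lemma2p2:
  fixes smul :: "'k::{field,t2_space} \<Rightarrow> 'f::{ab_group_add,t2_space} \<Rightarrow> 'f"
    and d k :: nat and U :: "(nat \<Rightarrow> 'k) set" and f :: "(nat \<Rightarrow> 'k) \<Rightarrow> 'f"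
  assumes "topological_field TYPE('k)"
    and "tvs smul"
    and "0 < d"
    and "U \<subseteq> PiE {..<d} (\<lambda>_. UNIV)"
    and "openin (prodtop {..<d}) U \<or>
         (\<exists>Us. (\<forall>i<d. Us i \<subseteq> closure (interior (Us i))) \<and> U = PiE {..<d} Us)"
  shows "(sds_C smul {..<d} U f 1 \<and>
          (\<forall>i\<in>{..<d}. sds_C smul (SIGMA l:{..<d}. {..unitmi i l}) (sds_lt {..<d} (unitmi i) U)
                          (sds_ext smul {..<d} U f (unitmi i)) k)
          \<longrightarrow> sds_C smul {..<d} U f (Suc k))
       \<and> (\<forall>(av :: 'k \<Rightarrow> real) (\<sigma>::real). valued_field av \<and> 0 < \<sigma> \<and>
            sds_CH av smul {..<d} U f 1 \<sigma> \<and>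
            (\<forall>i\<in>{..<d}. sds_CH av smul (SIGMA l:{..<d}. {..unitmi i l}) (sds_lt {..<d} (unitmi i) U)
                          (sds_ext smul {..<d} U f (unitmi i)) k \<sigma>)
            \<longrightarrow> sds_CH av smul {..<d} U f (Suc k) \<sigma>)"
  proof -
  have vs: "vector_space smul" using assms(2) unfolding tvs_def by simp
  have fin: "finite {..<d}" by simp
  have hU: "openin (prodtop {..<d}) U \<or> (\<exists>Us. (\<forall>i\<in>{..<d}. Us i \<subseteq> closure (interior (Us i))) \<and> U = PiE {..<d} Us)"
    using assms(5) by (simp only: Ball_def lessThan_iff)
  show ?thesis
  proof (intro conjI impI allI)
    assume "sds_C smul {..<d} U f 1 \<and>
          (\<forall>i\<in>{..<d}. sds_C smul (SIGMA l:{..<d}. {..unitmi i l}) (sds_lt {..<d} (unitmi i) U)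
                          (sds_ext smul {..<d} U f (unitmi i)) k)"
    then show "sds_C smul {..<d} U f (Suc k)" using partA[OF vs fin] by blast
  next
    fix av :: "'k \<Rightarrow> real" and \<sigma> :: real
    assume h: "valued_field av \<and> 0 < \<sigma> \<and>
            sds_CH av smul {..<d} U f 1 \<sigma> \<and>
            (\<forall>i\<in>{..<d}. sds_CH av smul (SIGMA l:{..<d}. {..unitmi i l}) (sds_lt {..<d} (unitmi i) U)
                          (sds_ext smul {..<d} U f (unitmi i)) k \<sigma>)"
    show "sds_CH av smul {..<d} U f (Suc k) \<sigma>"
      using partB[OF assms(1) vs fin hU] h by blast
  qed
qed

end
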